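(* Let $\alpha\ge0$ and $0\le\beta<1$. If $f=h+\overline{g}\in\mathcal{W}_{\mathcal{H}}^0(\alpha,\beta)$ and $\phi$ is a normalized convex univalent analytic function in $\mathbb{D}$ (i.e. $\phi(0)=0$, $\phi'(0)=1$, $\phi$ univalent and $\phi(\mathbb{D})$ convex), then $h*\phi+\overline{g*\phi}\in\mathcal{W}_{\mathcal{H}}^0(\alpha,\beta)$.
   Context: Let $\mathbb{D}=\{z\in\mathbb{C}:|z|<1\}$. $\mathcal{H}^0$ denotes the class of harmonic maps $f=h+\overline{g}$ on $\mathbb{D}$, with $h,g$ analytic in $\mathbb{D}$, $h(z)=z+\sum_{n\ge2}a_nz^n$ and $g(z)=\sum_{n\ge2}b_nz^n$. For $\alpha\ge0$, $0\le\beta<1$, $\mathcal{W}_{\mathcal{H}}^0(\alpha,\beta)$ denotes the class of $f=h+\overline{g}\in\mathcal{H}^0$ such that $\Re\big(h'(z)+\alpha zh''(z)-\beta\big)>|g'(z)+\alpha zg''(z)|$ for all $z\in\mathbb{D}$. For analytic $\psi_1(z)=\sum c_nz^n$, $\psi_2(z)=\sum d_nz^n$, the Hadamard product is $(\psi_1*\psi_2)(z)=\sum c_nd_nz^n$. *)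

theory Defs
  imports "HOL-Complex_Analysis.Complex_Analysis"
begin

definition taylor_coeff :: "(complex \<Rightarrow> complex) \<Rightarrow> nat \<Rightarrow> complex" where
  "taylor_coeff f n = (deriv ^^ n) f 0 / of_nat (fact n)"

definition hadamard :: "(complex \<Rightarrow> complex) \<Rightarrow> (complex \<Rightarrow> complex) \<Rightarrow> complex \<Rightarrow> complex" where
  "hadamard f g z = (\<Sum>n. taylor_coeff f n * taylor_coeff g n * z ^ n)"

text \<open>The class W_H^0(alpha,beta), for f = h + conj g given by the pair (h,g).\<close>
definition W_H0 :: "real \<Rightarrow> real \<Rightarrow> (complex \<Rightarrow> complex) \<Rightarrow> (complex \<Rightarrow> complex) \<Rightarrow> bool" where
  "W_H0 \<alpha> \<beta> h g \<longleftrightarrow>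
     h holomorphic_on ball 0 1 \<and> g holomorphic_on ball 0 1 \<and>
     h 0 = 0 \<and> deriv h 0 = 1 \<and> g 0 = 0 \<and> deriv g 0 = 0 \<and>
     (\<forall>z\<in>ball 0 1.
        Re (deriv h z + of_real \<alpha> * z * deriv (deriv h) z - of_real \<beta>)
          > norm (deriv g z + of_real \<alpha> * z * deriv (deriv g) z))"

definition normalized_convex_univalent :: "(complex \<Rightarrow> complex) \<Rightarrow> bool" where
  "normalized_convex_univalent \<phi> \<longleftrightarrow>
     \<phi> holomorphic_on ball 0 1 \<and> \<phi> 0 = 0 \<and> deriv \<phi> 0 = 1 \<and>
     inj_on \<phi> (ball 0 1) \<and> convex (\<phi> ` ball 0 1)"

end

theory Submission
  imports Defs
begin


lemma L0:
  fixes k :: int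
  shows "((\<lambda>t. cis (of_int k * t)) has_integral (if k = 0 then complex_of_real (2*pi) else 0)) {0..2*pi}"
proof (cases "k = 0")
  case True
  then show ?thesis using has_integral_const_real[of "1::complex" 0 "2*pi"]
    by (simp add: scaleR_conv_of_real)
next
  case False
  have d: "((\<lambda>t. cis (of_int k * t) / (\<i> * of_int k)) has_vector_derivative cis (of_int k * t)) (at t within {0..2*pi})" for t
  proof -
    have "((\<lambda>t. cis (of_int k * t)) has_derivative (\<lambda>x. (of_int k * x) *\<^sub>R (\<i> * cis (of_int k * t)))) (at t within {0..2*pi})"
      by (auto intro!: derivative_eq_intros)
    then have "((\<lambda>t. cis (of_int k * t)) has_vector_derivative (of_int k * (\<i> * cis (of_int k * t)))) (at t within {0..2*pi})"
      by (simp add: has_vector_derivative_def scaleR_conv_of_real mult_ac)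
    then have "((\<lambda>t. cis (of_int k * t) / (\<i> * of_int k)) has_vector_derivative (of_int k * (\<i> * cis (of_int k * t))) / (\<i> * of_int k)) (at t within {0..2*pi})"
      by (rule has_vector_derivative_divide)
    then show ?thesis using False by (simp add: field_simps)
  qed
  have "((\<lambda>t. cis (of_int k * t)) has_integral (cis (of_int k * (2*pi)) / (\<i> * of_int k) - cis (of_int k * 0) / (\<i> * of_int k))) {0..2*pi}"
    by (rule fundamental_theorem_of_calculus) (use d in auto)
  moreover have "cis (of_int k * (2*pi)) = 1"
    using cis_multiple_2pi[of "of_int k"] by (simp add: mult_ac)
  ultimately show ?thesis using False by simp
qed

lemma L1:
  fixes f :: "nat \<Rightarrow> real \<Rightarrow> complex"
  assumes cont: "\<And>n. continuous_on {0..2*pi} (f n)"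
    and bd: "\<And>n t. t \<in> {0..2*pi} \<Longrightarrow> norm (f n t) \<le> M n" and sM: "summable M"
    and int: "\<And>n. (f n has_integral I n) {0..2*pi}"
  shows "((\<lambda>t. \<Sum>n. f n t) has_integral (\<Sum>n. I n)) {0..2*pi}" and "summable I"
proof -
  have u: "uniform_limit {0..2*pi} (\<lambda>n x. \<Sum>i<n. f i x) (\<lambda>x. \<Sum>i. f i x) sequentially"
    by (rule Weierstrass_m_test[OF bd sM])
  have c: "\<And>n. continuous_on {0..2*pi} (\<lambda>x. \<Sum>i<n. f i x)"
    by (intro continuous_on_sum cont) 
  obtain I' J where I': "\<And>n. ((\<lambda>x. \<Sum>i<n. f i x) has_integral I' n) {0..2*pi}"
    and J: "((\<lambda>x. \<Sum>i. f i x) has_integral J) {0..2*pi}" and lim: "(I' \<longlongrightarrow> J) sequentially"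
    by (rule uniform_limit_integral[OF u c]) auto
  have "I' n = (\<Sum>i<n. I i)" for n
    by (rule has_integral_unique[OF I'[of n]]) (intro has_integral_sum int, simp)
  then have "I' = (\<lambda>n. \<Sum>i<n. I i)" by auto
  with lim have "I sums J" unfolding sums_def by simp
  then show "((\<lambda>t. \<Sum>n. f n t) has_integral (\<Sum>n. I n)) {0..2*pi}" "summable I"
    using J sums_unique by (auto simp: sums_summable)
qed

lemma Lc:
  fixes v :: "nat \<Rightarrow> complex" and e :: "real \<Rightarrow> complex"
  assumes sv: "summable (\<lambda>m. norm (v m))" and ce: "continuous_on A e"
    and ne: "\<And>t. t \<in> A \<Longrightarrow> norm (e t) \<le> 1"
  shows "continuous_on A (\<lambda>t. \<Sum>m. v m * e t ^ m)"
proof (rule uniform_limit_theorem)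
  show "uniform_limit A (\<lambda>n x. \<Sum>i<n. v i * e x ^ i) (\<lambda>x. \<Sum>i. v i * e x ^ i) sequentially"
  proof (rule Weierstrass_m_test[OF _ sv])
    fix n x assume "x \<in> A"
    then have "norm (e x ^ n) \<le> 1" using ne by (simp add: norm_power power_le_one)
    then show "norm (v n * e x ^ n) \<le> norm (v n)"
      by (simp add: norm_mult mult_left_le)
  qed
  show "\<forall>\<^sub>F n in sequentially. continuous_on A (\<lambda>x. \<Sum>i<n. v i * e x ^ i)"
    by (intro always_eventually allI continuous_intros ce)
qed simp

lemma summable_unit:
  fixes v :: "nat \<Rightarrow> complex"
  assumes sv: "summable (\<lambda>m. norm (v m))" and "norm e \<le> 1"
  shows "summable (\<lambda>m. v m * e ^ m)"
proof (rule summable_norm_cancel, rule summable_comparison_test[OF _ sv])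
  have "norm (e ^ n) \<le> 1" for n using assms by (simp add: norm_power power_le_one)
  then show "\<exists>N. \<forall>n\<ge>N. norm (norm (v n * e ^ n)) \<le> norm (v n)"
    by (auto simp: norm_mult mult_left_le)
qed

lemma cis_pow2: "cis a ^ m * cis b ^ n = cis (real m * a + real n * b)"
  by (simp add: Complex.DeMoivre cis_mult)

lemma L2a:
  fixes v :: "nat \<Rightarrow> complex"
  assumes sv: "summable (\<lambda>m. norm (v m))"
  shows "((\<lambda>t. cis (-t) ^ n * (\<Sum>m. v m * cis t ^ m)) has_integral (2*pi) * v n) {0..2*pi}"
proof -
  define f where "f m t = v m * cis (of_int (int m - int n) * t)" for m t
  have eq: "cis (-t) ^ n * (\<Sum>m. v m * cis t ^ m) = (\<Sum>m. f m t)" for t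
  proof -
    have "cis (-t) ^ n * (\<Sum>m. v m * cis t ^ m) = (\<Sum>m. cis (-t) ^ n * (v m * cis t ^ m))"
      by (rule suminf_mult[symmetric], rule summable_unit[OF sv]) simp
    also have "\<dots> = (\<Sum>m. f m t)"
    proof (rule suminf_cong)
      fix m
      have "cis t ^ m * cis (-t) ^ n = cis (real m * t + real n * (-t))" by (rule cis_pow2)
      also have "real m * t + real n * (-t) = of_int (int m - int n) * t" by (simp add: algebra_simps)
      finally show "cis (-t) ^ n * (v m * cis t ^ m) = f m t" by (simp add: f_def mult_ac)
    qed
    finally show ?thesis .
  qed
  have "((\<lambda>t. \<Sum>m. f m t) has_integral (\<Sum>m. v m * (if int m - int n = 0 then complex_of_real (2*pi) else 0))) {0..2*pi}"
  proof (rule L1)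
    show "continuous_on {0..2*pi} (f m)" for m unfolding f_def by (intro continuous_intros)
    show "norm (f m t) \<le> norm (v m)" for m t by (simp add: f_def norm_mult)
    show "((f m) has_integral (v m * (if int m - int n = 0 then complex_of_real (2*pi) else 0))) {0..2*pi}" for m
      unfolding f_def by (rule has_integral_mult_right, rule L0)
  qed (rule sv)
  moreover have "(\<Sum>m. v m * (if int m - int n = 0 then complex_of_real (2*pi) else 0)) = (2*pi) * v n"
  proof -
    have "(\<lambda>m. v m * (if int m - int n = 0 then complex_of_real (2*pi) else 0)) = (\<lambda>m. if m = n then (2*pi) * v m else 0)"
      by (auto simp: fun_eq_iff)
    then show ?thesis using sums_single[of n "\<lambda>m. (2*pi) * v m"] sums_unique by metis
  qed
  ultimately show ?thesis by (simp add: eq)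
qed

lemma L2b:
  fixes v :: "nat \<Rightarrow> complex"
  assumes sv: "summable (\<lambda>m. norm (v m))"
  shows "((\<lambda>t. cis (-t) ^ n * (\<Sum>m. v m * cis (-t) ^ m)) has_integral (if n = 0 then (2*pi) * v 0 else 0)) {0..2*pi}"
proof -
  define f where "f m t = v m * cis (of_int (- (int m + int n)) * t)" for m t
  have eq: "cis (-t) ^ n * (\<Sum>m. v m * cis (-t) ^ m) = (\<Sum>m. f m t)" for t
  proof -
    have "cis (-t) ^ n * (\<Sum>m. v m * cis (-t) ^ m) = (\<Sum>m. cis (-t) ^ n * (v m * cis (-t) ^ m))"
      by (rule suminf_mult[symmetric], rule summable_unit[OF sv]) simp
    also have "\<dots> = (\<Sum>m. f m t)"
    proof (rule suminf_cong)
      fix m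
      have "cis (-t) ^ m * cis (-t) ^ n = cis (real m * (-t) + real n * (-t))" by (rule cis_pow2)
      also have "real m * (-t) + real n * (-t) = of_int (- (int m + int n)) * t" by (simp add: algebra_simps)
      finally show "cis (-t) ^ n * (v m * cis (-t) ^ m) = f m t" by (simp add: f_def mult_ac)
    qed
    finally show ?thesis .
  qed
  have "((\<lambda>t. \<Sum>m. f m t) has_integral (\<Sum>m. v m * (if - (int m + int n) = 0 then complex_of_real (2*pi) else 0))) {0..2*pi}"
  proof (rule L1)
    show "continuous_on {0..2*pi} (f m)" for m unfolding f_def by (intro continuous_intros)
    show "norm (f m t) \<le> norm (v m)" for m t by (simp add: f_def norm_mult)
    show "((f m) has_integral (v m * (if - (int m + int n) = 0 then complex_of_real (2*pi) else 0))) {0..2*pi}" for m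
      unfolding f_def by (rule has_integral_mult_right, rule L0)
  qed (rule sv)
  moreover have "(\<Sum>m. v m * (if - (int m + int n) = 0 then complex_of_real (2*pi) else 0)) = (if n = 0 then (2*pi) * v 0 else 0)"
  proof (cases "n = 0")
    case True
    have "(\<lambda>m. v m * (if - (int m + int n) = 0 then complex_of_real (2*pi) else 0)) = (\<lambda>m. if m = 0 then (2*pi) * v m else 0)"
      using True by (auto simp: fun_eq_iff)
    then show ?thesis using True sums_single[of 0 "\<lambda>m. (2*pi) * v m"] sums_unique by metis
  next
    case False
    then have "(\<lambda>m. v m * (if - (int m + int n) = 0 then complex_of_real (2*pi) else 0)) = (\<lambda>m. 0)"
      by (auto simp: fun_eq_iff)
    then show ?thesis using False by simp
  qed
  ultimately show ?thesis by (simp add: eq)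
qed

lemma L3:
  fixes u :: "nat \<Rightarrow> complex" and B :: "real \<Rightarrow> complex"
  assumes su: "summable (\<lambda>n. norm (u n))" and cB: "continuous_on {0..2*pi} B"
    and bB: "\<And>t. t \<in> {0..2*pi} \<Longrightarrow> norm (B t) \<le> Bb"
    and J: "\<And>n. ((\<lambda>t. cis (-t) ^ n * B t) has_integral J n) {0..2*pi}"
  shows "((\<lambda>t. (\<Sum>n. u n * cis (-t) ^ n) * B t) has_integral (\<Sum>n. u n * J n)) {0..2*pi}"
proof -
  have eq: "(\<Sum>n. u n * cis (-t) ^ n) * B t = (\<Sum>n. u n * (cis (-t) ^ n * B t))" for t
  proof -
    have "(\<Sum>n. u n * cis (-t) ^ n) * B t = (\<Sum>n. u n * cis (-t) ^ n * B t)"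
      by (rule suminf_mult2, rule summable_unit[OF su]) simp
    then show ?thesis by (simp add: mult.assoc)
  qed
  have "((\<lambda>t. \<Sum>n. u n * (cis (-t) ^ n * B t)) has_integral (\<Sum>n. u n * J n)) {0..2*pi}"
  proof (rule L1)
    show "continuous_on {0..2*pi} (\<lambda>t. u n * (cis (-t) ^ n * B t))" for n
      by (intro continuous_intros cB)
    show "norm (u n * (cis (-t) ^ n * B t)) \<le> norm (u n) * Bb" if "t \<in> {0..2*pi}" for n t
      using bB[OF that] by (simp add: norm_mult norm_power mult_left_mono)
    show "summable (\<lambda>n. norm (u n) * Bb)" by (rule summable_mult2[OF su])
    show "((\<lambda>t. u n * (cis (-t) ^ n * B t)) has_integral u n * J n) {0..2*pi}" for n
      by (rule has_integral_mult_right[OF J])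
  qed
  then show ?thesis by (simp add: eq)
qed



lemma norm_series_unit:
  fixes v :: "nat \<Rightarrow> complex"
  assumes sv: "summable (\<lambda>m. norm (v m))" and e: "norm e \<le> 1"
  shows "norm (\<Sum>m. v m * e ^ m) \<le> (\<Sum>m. norm (v m))"
proof -
  have ne: "norm (v m * e ^ m) \<le> norm (v m)" for m
    using e by (simp add: norm_mult norm_power mult_left_le power_le_one)
  have s2: "summable (\<lambda>m. norm (v m * e ^ m))"
    by (rule summable_comparison_test[OF _ sv]) (use ne in auto)
  have "norm (\<Sum>m. v m * e ^ m) \<le> (\<Sum>m. norm (v m * e ^ m))" by (rule summable_norm[OF s2])
  also have "\<dots> \<le> (\<Sum>m. norm (v m))" by (rule suminf_le[OF ne s2 sv])
  finally show ?thesis .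
qed

lemma norm_le_suminf:
  assumes "summable (\<lambda>m. norm (v m :: complex))"
  shows "norm (v n) \<le> (\<Sum>m. norm (v m))"
  using sum_le_suminf[OF assms, of "{n}"] by simp

lemma abs_summ_inside:
  fixes p :: "nat \<Rightarrow> complex"
  assumes sp: "\<And>\<zeta>. norm \<zeta> < 1 \<Longrightarrow> summable (\<lambda>n. p n * \<zeta>^n)" and z: "norm z < 1"
  shows "summable (\<lambda>n. norm (p n * z^n))"
proof (rule powser_insidea[OF sp])
  show "norm (complex_of_real ((norm z + 1)/2)) < 1" using z by simp
  show "norm z < norm (complex_of_real ((norm z + 1)/2))" using z by simp
qed

lemma lemK:
  fixes p q :: "nat \<Rightarrow> complex" and w :: complex
  assumes sp: "\<And>\<zeta>. norm \<zeta> < 1 \<Longrightarrow> summable (\<lambda>n. p n * \<zeta>^n)"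
    and sq: "\<And>\<zeta>. norm \<zeta> < 1 \<Longrightarrow> summable (\<lambda>n. q n * \<zeta>^n)"
    and P: "\<And>\<zeta>. norm \<zeta> < 1 \<Longrightarrow> Re (\<Sum>n. p n * \<zeta>^n) > 0"
    and Q: "\<And>\<zeta>. norm \<zeta> < 1 \<Longrightarrow> Re (\<Sum>n. q n * \<zeta>^n) \<ge> 1/2"
    and q0: "q 0 = 1" and w: "norm w < 1"
  shows "Re (\<Sum>n. p n * q n * w^n) > 0"
proof -
  define r :: real where "r = (norm w + 1) / 2"
  have nw0: "0 \<le> norm w" by simp
  have r1: "norm w < r" using w unfolding r_def by simp
  have r2: "r < 1" using w unfolding r_def by simp
  have r3: "0 < r" using r1 nw0 by linarith
  note r = r1 r2 r3
  have nr: "norm (complex_of_real r) = r" using r3 by (simp only: norm_of_real abs_of_pos)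
  define z where "z = w / of_real r"
  have nz: "norm z < 1" using r by (simp add: z_def norm_divide)
  have wz: "w = z * of_real r" using r by (simp add: z_def)
  define u where "u n = p n * z^n" for n
  define v where "v n = q n * of_real r ^ n" for n
  define vc where "vc n = cnj (v n)" for n
  have su: "summable (\<lambda>n. norm (u n))" unfolding u_def by (rule abs_summ_inside[OF sp nz])
  have nr1: "norm (complex_of_real r) < 1" using nr r2 by simp
  have sv: "summable (\<lambda>n. norm (v n))" unfolding v_def by (rule abs_summ_inside[OF sq nr1])
  have svc: "summable (\<lambda>n. norm (vc n))" using sv by (simp add: vc_def)
  define Pt where "Pt t = (\<Sum>n. u n * cis (-t) ^ n)" for t
  define Qt where "Qt t = (\<Sum>n. v n * cis t ^ n)" for t
  define Qc where "Qc t = (\<Sum>n. vc n * cis (-t) ^ n)" for t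
  have Pt_eq: "Pt t = (\<Sum>n. p n * (z * cis (-t)) ^ n)" for t
    by (simp add: Pt_def u_def power_mult_distrib mult.assoc)
  have Qt_eq: "Qt t = (\<Sum>n. q n * (of_real r * cis t) ^ n)" for t
    by (simp add: Qt_def v_def power_mult_distrib mult.assoc)
  have Qc_eq: "Qc t = cnj (Qt t)" for t
  proof -
    have "(\<lambda>n. v n * cis t ^ n) sums Qt t"
      unfolding Qt_def by (rule summable_sums, rule summable_unit[OF sv]) simp
    then have "(\<lambda>n. cnj (v n * cis t ^ n)) sums cnj (Qt t)" by (simp only: sums_cnj)
    then have "(\<lambda>n. vc n * cis (-t) ^ n) sums cnj (Qt t)" by (simp add: vc_def cis_cnj)
    then show ?thesis unfolding Qc_def by (simp add: sums_iff)
  qed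
  define K where "K t = Qt t + Qc t - 1" for t
  have cPt: "continuous_on {0..2*pi} Pt" unfolding Pt_def by (rule Lc[OF su]) (simp_all, intro continuous_intros)
  have cQt: "continuous_on {0..2*pi} Qt" unfolding Qt_def by (rule Lc[OF sv]) (simp_all, intro continuous_intros)
  have cQc: "continuous_on {0..2*pi} Qc" unfolding Qc_def by (rule Lc[OF svc]) (simp_all, intro continuous_intros)
  have bQt: "norm (Qt t) \<le> (\<Sum>m. norm (v m))" for t unfolding Qt_def by (rule norm_series_unit[OF sv]) simp
  have bQc: "norm (Qc t) \<le> (\<Sum>m. norm (vc m))" for t unfolding Qc_def by (rule norm_series_unit[OF svc]) simp
  have I1: "((\<lambda>t. Pt t * Qt t) has_integral (\<Sum>n. u n * ((2*pi) * v n))) {0..2*pi}"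
    unfolding Pt_def by (rule L3[OF su cQt bQt], unfold Qt_def, rule L2a[OF sv])
  have I2': "((\<lambda>t. Pt t * Qc t) has_integral (\<Sum>n. u n * (if n = 0 then (2*pi) * vc 0 else 0))) {0..2*pi}"
    unfolding Pt_def by (rule L3[OF su cQc bQc], unfold Qc_def, rule L2b[OF svc])
  have "(\<lambda>n. u n * (if n = 0 then (2*pi) * vc 0 else 0)) = (\<lambda>n. if n = 0 then u 0 * ((2*pi) * vc 0) else 0)"
    by auto
  then have "(\<Sum>n. u n * (if n = 0 then (2*pi) * vc 0 else 0)) = u 0 * ((2*pi) * vc 0)"
    using sums_single[of 0 "\<lambda>_. u 0 * ((2*pi) * vc 0)"] sums_unique by metis
  with I2' have I2: "((\<lambda>t. Pt t * Qc t) has_integral (2*pi) * u 0) {0..2*pi}"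
    using q0 by (simp add: vc_def v_def mult.commute)
  have I3: "(Pt has_integral (2*pi) * u 0) {0..2*pi}"
    using L2b[OF su, of 0] unfolding Pt_def by simp
  have IQt: "(Qt has_integral (2*pi)) {0..2*pi}"
    using L2a[OF sv, of 0] q0 unfolding Qt_def by (simp add: v_def)
  have IQc: "(Qc has_integral (2*pi)) {0..2*pi}"
    using L2b[OF svc, of 0] q0 unfolding Qc_def by (simp add: vc_def v_def)
  have IK: "(K has_integral (2*pi)) {0..2*pi}"
  proof -
    have "((\<lambda>t. Qt t + Qc t - 1) has_integral (2*pi + 2*pi - 2*pi)) {0..2*pi}"
      using has_integral_diff[OF has_integral_add[OF IQt IQc] has_integral_const_real[of "1::complex" 0 "2*pi"]]
      by (simp add: scaleR_conv_of_real)
    then show ?thesis by (simp add: K_def[abs_def])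
  qed
  define S where "S = (\<Sum>n. p n * q n * w^n)"
  have uv: "u n * v n = p n * q n * w^n" for n
    by (simp add: u_def v_def wz power_mult_distrib mult_ac)
  have suv: "summable (\<lambda>n. u n * v n)"
  proof (rule summable_norm_cancel, rule summable_comparison_test[OF _ summable_mult2[OF su, of "\<Sum>m. norm (v m)"]])
    show "\<exists>N. \<forall>n\<ge>N. norm (norm (u n * v n)) \<le> norm (u n) * (\<Sum>m. norm (v m))"
      using norm_le_suminf[OF sv] by (auto simp: norm_mult intro!: mult_left_mono)
  qed
  have "(\<Sum>n. u n * ((2*pi) * v n)) = (2*pi) * S"
  proof -
    have "(\<Sum>n. u n * ((2*pi) * v n)) = (\<Sum>n. (2*pi) * (u n * v n))" by (simp add: mult_ac)
    also have "\<dots> = (2*pi) * (\<Sum>n. u n * v n)" by (rule suminf_mult[OF suv])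
    finally show ?thesis by (simp add: S_def uv)
  qed
  with I1 have I1': "((\<lambda>t. Pt t * Qt t) has_integral (2*pi) * S) {0..2*pi}" by simp
  have IPK: "((\<lambda>t. Pt t * K t) has_integral (2*pi) * S) {0..2*pi}"
  proof -
    have "((\<lambda>t. Pt t * Qt t + Pt t * Qc t - Pt t) has_integral ((2*pi) * S + (2*pi) * u 0 - (2*pi) * u 0)) {0..2*pi}"
      by (intro has_integral_diff has_integral_add I1' I2 I3)
    then show ?thesis by (simp add: K_def algebra_simps)
  qed
  obtain t0 where t0: "t0 \<in> {0..2*pi}" and t0min: "\<And>t. t \<in> {0..2*pi} \<Longrightarrow> Re (Pt t0) \<le> Re (Pt t)"
  proof -
    have "continuous_on {0..2*pi} (\<lambda>t. Re (Pt t))" by (intro continuous_intros cPt)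
    then have "\<exists>x\<in>{0..2*pi}. \<forall>y\<in>{0..2*pi}. Re (Pt x) \<le> Re (Pt y)"
      by (intro continuous_attains_inf) auto
    then show ?thesis using that by blast
  qed
  define mm where "mm = Re (Pt t0)"
  have nzc: "norm (z * cis (-t)) < 1" for t using nz by (simp add: norm_mult)
  have mm: "mm > 0" unfolding mm_def Pt_eq by (rule P[OF nzc])
  have ReK: "Re (K t) \<ge> 0" "Im (K t) = 0" for t
  proof -
    have "norm (of_real r * cis t) < 1" using r by (simp add: norm_mult)
    then have "Re (Qt t) \<ge> 1/2" unfolding Qt_eq by (rule Q)
    then show "Re (K t) \<ge> 0" "Im (K t) = 0" by (simp_all add: K_def Qc_eq)
  qed
  have le: "mm * Re (K t) \<le> Re (Pt t * K t)" if "t \<in> {0..2*pi}" for t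
  proof -
    have "mm * Re (K t) \<le> Re (Pt t) * Re (K t)"
      using t0min[OF that] ReK(1)[of t] by (simp add: mm_def mult_right_mono)
    then show ?thesis using ReK(2)[of t] by simp
  qed
  have A1: "((\<lambda>t. mm * Re (K t)) has_integral mm * (2*pi)) {0..2*pi}"
    using has_integral_mult_right[OF has_integral_linear[OF IK bounded_linear_Re], of mm]
    by (simp add: o_def)
  have A2: "((\<lambda>t. Re (Pt t * K t)) has_integral Re ((2*pi) * S)) {0..2*pi}"
    using has_integral_linear[OF IPK bounded_linear_Re] by (simp add: o_def)
  have "mm * (2*pi) \<le> Re ((2*pi) * S)" by (rule has_integral_le[OF A1 A2 le])
  then have "mm * (2*pi) \<le> (2*pi) * Re S" by simp
  then have "mm \<le> Re S" using pi_gt_zero by (simp add: mult.commute)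
  with mm show ?thesis by (simp add: S_def)
qed



lemma moeb_id:
  fixes m w :: complex
  shows "(cmod (1 - cnj m * w))^2 - (cmod (w - m))^2 = (1 - (cmod m)^2) * (1 - (cmod w)^2)"
  by (simp only: cmod_power2) (simp add: algebra_simps power2_eq_square)

lemma SP:
  fixes F :: "complex \<Rightarrow> complex"
  assumes hol: "F holomorphic_on ball 0 1" and into: "\<And>z. norm z < 1 \<Longrightarrow> norm (F z) < 1"
    and x: "norm x < 1"
  shows "(1 - (cmod x)^2) * (cmod (1 - cnj (F 0) * F x))^2 \<le> (1 - (cmod (F 0))^2) * (1 - (cmod (F x))^2)"
proof -
  define m where "m = F 0"
  have m: "norm m < 1" unfolding m_def by (rule into) simp
  have den: "1 - cnj m * w \<noteq> 0" if "norm w < 1" for w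
  proof
    assume "1 - cnj m * w = 0"
    then have "cnj m * w = 1" by simp
    then have "norm (cnj m * w) = 1" by simp
    moreover have "norm (cnj m * w) < 1"
      using m that by (simp add: norm_mult) (metis mult_strict_mono' norm_ge_zero mult_1_left less_le_trans mult_le_one less_imp_le)
    ultimately show False by simp
  qed
  define S where "S z = (F z - m) / (1 - cnj m * F z)" for z
  have holS: "S holomorphic_on ball 0 1"
    unfolding S_def by (intro holomorphic_intros hol) (use den into in auto)
  have S0: "S 0 = 0" by (simp add: S_def m_def)
  have Sin: "norm (S z) < 1" if "norm z < 1" for z
  proof -
    have Fz: "norm (F z) < 1" using into that .
    have "(cmod (1 - cnj m * F z))^2 - (cmod (F z - m))^2 > 0"
      unfolding moeb_id using m Fz
      by (intro mult_pos_pos) (simp_all add: power_less_one_iff abs_square_less_1)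
    then have "(cmod (F z - m))^2 < (cmod (1 - cnj m * F z))^2" by simp
    then have "cmod (F z - m) < cmod (1 - cnj m * F z)"
      using power_less_imp_less_base by fastforce
    then show ?thesis using den[OF Fz] by (simp add: S_def norm_divide divide_less_eq)
  qed
  have "norm (S x) \<le> norm x"
    using Schwarz_Lemma(1)[OF holS S0 _ x] Sin by auto
  then have "cmod (F x - m) \<le> cmod x * cmod (1 - cnj m * F x)"
    using den[OF into[OF x]] by (simp add: S_def norm_divide divide_le_eq)
  then have "(cmod (F x - m))^2 \<le> (cmod x)^2 * (cmod (1 - cnj m * F x))^2"
    by (metis power_mono norm_ge_zero power_mult_distrib)
  then have "(1 - (cmod x)^2) * (cmod (1 - cnj m * F x))^2 \<le> (cmod (1 - cnj m * F x))^2 - (cmod (F x - m))^2"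
    by (simp add: algebra_simps)
  also have "\<dots> = (1 - (cmod m)^2) * (1 - (cmod (F x))^2)" by (rule moeb_id)
  finally show ?thesis by (simp add: m_def)
qed

lemma study:
  fixes f :: "complex \<Rightarrow> complex"
  assumes hol: "f holomorphic_on ball 0 1" and inj: "inj_on f (ball 0 1)" and f0: "f 0 = 0"
    and cv: "convex (f ` ball 0 1)" and r: "0 < r" "r \<le> 1"
  shows "convex (f ` ball 0 r)"
proof -
  obtain g where holg: "g holomorphic_on (f ` ball 0 1)" and gf: "\<And>z. z \<in> ball 0 1 \<Longrightarrow> g (f z) = z"
    using holomorphic_has_inverse[OF hol open_ball inj] by metis
  have core: "u *\<^sub>R f x + v *\<^sub>R f y \<in> f ` ball 0 r"
    if x: "x \<in> ball 0 r" and y: "y \<in> ball 0 r" and xy: "norm x \<le> norm y"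
      and u: "0 \<le> u" and v: "0 \<le> v" and uv: "u + v = 1" for x y u v
  proof (cases "y = 0")
    case True
    then have "x = 0" using xy by simp
    then show ?thesis using True uv r f0 by (auto simp: scaleR_conv_of_real simp flip: distrib_right intro!: image_eqI[of _ _ 0])
  next
    case False
    define c where "c = x / y"
    have c: "norm c \<le> 1" using xy False by (simp add: c_def norm_divide divide_le_eq)
    have cy: "c * y = x" using False by (simp add: c_def)
    define G where "G z = of_real u * f (c * z) + of_real v * f z" for z
    have inb: "c * z \<in> ball 0 1" if "z \<in> ball 0 1" for z
    proof -
      have "cmod c * cmod z \<le> 1 * cmod z" using c by (intro mult_right_mono) auto
      then show ?thesis using that by (simp add: norm_mult)
    qed
    have Gin: "G z \<in> f ` ball 0 1" if "z \<in> ball 0 1" for z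
      using convexD[OF cv imageI[OF inb[OF that]] imageI[OF that] u v uv]
      by (simp add: G_def scaleR_conv_of_real)
    have holG: "G holomorphic_on ball 0 1"
      unfolding G_def
      by (intro holomorphic_intros holomorphic_on_compose_gen[OF _ hol, unfolded o_def] hol) (use inb in auto)
    define \<omega> where "\<omega> = g \<circ> G"
    have hol\<omega>: "\<omega> holomorphic_on ball 0 1"
      unfolding \<omega>_def by (rule holomorphic_on_compose_gen[OF holG holg]) (use Gin in auto)
    have \<omega>0: "\<omega> 0 = 0"
    proof -
      have "G 0 = f 0" using uv by (simp add: G_def f0)
      then show ?thesis using gf[of 0] by (simp add: \<omega>_def)
    qed
    have \<omega>in: "norm (\<omega> z) < 1" and f\<omega>: "f (\<omega> z) = G z" if nz: "norm z < 1" for z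
    proof -
      obtain b where b: "b \<in> ball 0 1" "G z = f b" using Gin[of z] nz by auto
      then have "\<omega> z = b" using gf by (simp add: \<omega>_def)
      then show "norm (\<omega> z) < 1" "f (\<omega> z) = G z" using b by auto
    qed
    have ny: "norm y < 1" using y r by auto
    have "norm (\<omega> y) \<le> norm y" by (rule Schwarz_Lemma(1)[OF hol\<omega> \<omega>0 \<omega>in ny])
    then have "\<omega> y \<in> ball 0 r" using y by auto
    moreover have "f (\<omega> y) = u *\<^sub>R f x + v *\<^sub>R f y"
      using f\<omega>[OF ny] by (simp add: G_def cy scaleR_conv_of_real)
    ultimately show ?thesis by (metis imageI)
  qed
  show ?thesis
  proof (rule convexI)
    fix a b :: complex and u v :: real assume a: "a \<in> f ` ball 0 r" and b: "b \<in> f ` ball 0 r"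
      and u: "0 \<le> u" and v: "0 \<le> v" and uv: "u + v = 1"
    obtain x y where x: "x \<in> ball 0 r" "a = f x" and y: "y \<in> ball 0 r" "b = f y" using a b by auto
    show "u *\<^sub>R a + v *\<^sub>R b \<in> f ` ball 0 r"
    proof (cases "norm x \<le> norm y")
      case True then show ?thesis using core[OF x(1) y(1) True u v uv] x y by simp
    next
      case False
      then have "norm y \<le> norm x" by simp
      from core[OF y(1) x(1) this v u] uv x y show ?thesis by (simp add: add.commute)
    qed
  qed
qed

lemma AL: "1 - (cmod (1 + (complex_of_real s - 1) * d))^2 = (1 - s) * (2 * Re d - (1 - s) * (cmod d)^2)"
  by (simp only: cmod_power2) (simp add: algebra_simps power2_eq_square)

lemma final_alg:
  fixes m :: complex and t :: real
  assumes h: "2 * (cmod (1 - cnj m))^2 \<le> (1 - (cmod m)^2) * (2 * (1 - t))" and t: "t < 1"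
  shows "t / 2 \<le> Re m"
proof -
  have h2: "2 * ((1 - Re m)^2 + (Im m)^2) \<le> (1 - ((Re m)^2 + (Im m)^2)) * (2 * (1 - t))"
    using h by (simp only: cmod_power2) simp
  have "0 \<le> ((Re m)^2 + (Im m)^2) * (2 - t)" using t by (intro mult_nonneg_nonneg) auto
  with h2 show ?thesis by (simp add: algebra_simps power2_eq_square)
qed

lemma lemML:
  fixes \<psi> :: "complex \<Rightarrow> complex" and R :: real
  assumes R: "1 < R" and hol: "\<psi> holomorphic_on ball 0 R" and inj: "inj_on \<psi> (ball 0 R)"
    and z0: "\<psi> 0 = 0" and d0: "deriv \<psi> 0 = 1" and cv: "convex (\<psi> ` ball 0 1)"
  shows "Re (\<psi> 1) \<ge> 1/2"
proof -
  obtain g where holg: "g holomorphic_on (\<psi> ` ball 0 R)"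
    and dg: "\<And>z. z \<in> ball 0 R \<Longrightarrow> deriv \<psi> z * deriv g (\<psi> z) = 1"
    and g\<psi>: "\<And>z. z \<in> ball 0 R \<Longrightarrow> g (\<psi> z) = z"
    using holomorphic_has_inverse[OF hol open_ball inj] by metis
  define U where "U = \<psi> ` ball 0 R"
  have oU: "open U" unfolding U_def by (rule open_mapping_thm3[OF hol open_ball inj])
  have sub1: "ball 0 1 \<subseteq> ball 0 R" using R by auto
  have cb: "cball 0 1 \<subseteq> ball 0 R" using R by auto
  define V where "V = \<psi> ` ball 0 1"
  have oV: "open V" unfolding V_def
    by (rule open_mapping_thm3[OF holomorphic_on_subset[OF hol sub1] open_ball inj_on_subset[OF inj sub1]])
  have VU: "V \<subseteq> U" using sub1 by (auto simp: U_def V_def)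
  define a where "a = \<psi> 1"
  have one: "(1::complex) \<in> ball 0 R" "(0::complex) \<in> ball 0 R" using R by auto
  have a0: "a \<noteq> 0"
  proof
    assume "a = 0"
    then have "\<psi> 1 = \<psi> 0" by (simp add: a_def z0)
    then show False using inj_onD[OF inj _ one] by auto
  qed
  have aU: "a \<in> U" using one by (auto simp: a_def U_def)
  have acl: "a \<in> closure V"
  proof -
    have "\<psi> ` closure (ball 0 1) \<subseteq> closure V"
    proof (rule image_closure_subset)
      show "continuous_on (closure (ball 0 1)) \<psi>"
        using holomorphic_on_imp_continuous_on[OF holomorphic_on_subset[OF hol cb]] by simp
      show "\<psi> ` ball 0 1 \<subseteq> closure V" using closure_subset[of V] by (simp add: V_def)
    qed simp
    moreover have "(1::complex) \<in> closure (ball 0 1)" by simp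
    ultimately show ?thesis by (auto simp: a_def)
  qed
  have gV: "g y \<in> ball 0 1 \<and> \<psi> (g y) = y" if "y \<in> V" for y
    using that sub1 g\<psi> by (auto simp: V_def)
  have key: "t / 2 \<le> Re (g (of_real t * a))" if t: "0 < t" "t < 1" for t
  proof -
    define wt where "wt \<zeta> = of_real (1-t) * \<psi> \<zeta> + of_real t * a" for \<zeta>
    have wtV: "wt \<zeta> \<in> V" if \<zeta>: "\<zeta> \<in> ball 0 1" for \<zeta>
    proof -
      have "\<zeta> \<noteq> 1" using \<zeta> by auto
      then have ne: "\<psi> \<zeta> \<noteq> a" using inj_onD[OF inj _ sub1[THEN subsetD, OF \<zeta>] one(1)] by (auto simp: a_def)
      have "\<psi> \<zeta> \<in> interior V" using oV \<zeta> by (simp add: interior_open V_def)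
      from in_interior_closure_convex_segment[OF cv[folded V_def] this acl]
      have "open_segment (\<psi> \<zeta>) a \<subseteq> interior V" .
      moreover have "wt \<zeta> \<in> open_segment (\<psi> \<zeta>) a"
        unfolding in_segment(2) using ne t by (auto simp: wt_def scaleR_conv_of_real intro!: exI[of _ t])
      ultimately show ?thesis using oV interior_open by auto
    qed
    define M where "M \<zeta> = g (wt \<zeta>)" for \<zeta>
    have holwt: "wt holomorphic_on ball 0 R" unfolding wt_def by (intro holomorphic_intros hol)
    have holM: "M holomorphic_on ball 0 1"
    proof -
      have "(g \<circ> wt) holomorphic_on ball 0 1"
        by (rule holomorphic_on_compose_gen[OF holomorphic_on_subset[OF holwt sub1] holg])
           (use wtV VU in \<open>auto simp: U_def\<close>)
      then show ?thesis by (simp add: M_def[abs_def] o_def)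
    qed
    have Min: "norm (M \<zeta>) < 1" if "norm \<zeta> < 1" for \<zeta>
      using gV[OF wtV[of \<zeta>]] that by (simp add: M_def)
    define m where "m = M 0"
    have m_eq: "m = g (of_real t * a)" by (simp add: m_def M_def wt_def z0)
    have SPs: "(1 - s^2) * (cmod (1 - cnj m * M (of_real s)))^2 \<le> (1 - (cmod m)^2) * (1 - (cmod (M (of_real s)))^2)"
      if s: "0 < s" "s < 1" for s
      using SP[OF holM Min, of "of_real s"] s by (simp add: m_def)
    have M1: "M 1 = 1" using g\<psi>[OF one(1)] by (simp add: M_def wt_def a_def algebra_simps flip: distrib_right of_real_add)
    have d1: "(wt has_field_derivative of_real (1-t) * deriv \<psi> 1) (at 1)"
      unfolding wt_def
      by (auto intro!: derivative_eq_intros holomorphic_derivI[OF hol open_ball one(1)])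
    have d2: "(g has_field_derivative deriv g a) (at (wt 1))"
    proof -
      have "wt 1 = a" by (simp add: wt_def a_def algebra_simps flip: distrib_right of_real_add)
      then show ?thesis using holomorphic_derivI[OF holg[folded U_def] oU aU] by simp
    qed
    have dM: "(M has_field_derivative of_real (1-t)) (at 1)"
    proof -
      have "((\<lambda>x. g (wt x)) has_field_derivative deriv g a * (of_real (1-t) * deriv \<psi> 1)) (at 1)"
        by (rule DERIV_chain2[OF d2 d1])
      moreover have "deriv \<psi> 1 * deriv g a = 1" using dg[OF one(1)] by (simp add: a_def)
      ultimately show ?thesis by (simp add: M_def[abs_def] algebra_simps)
    qed
    define D where "D s = (M (of_real s) - 1) / (of_real s - 1)" for s :: real
    have Dlim: "(D \<longlongrightarrow> of_real (1-t)) (at_left 1)"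
    proof -
      have l1: "((\<lambda>y. (M y - M 1) / (y - 1)) \<longlongrightarrow> of_real (1-t)) (at 1)"
        using dM by (simp add: has_field_derivative_iff)
      have l2: "filterlim (\<lambda>s::real. complex_of_real s) (at 1) (at_left 1)"
      proof (subst filterlim_at, intro conjI)
        show "\<forall>\<^sub>F s in at_left 1. complex_of_real s \<in> UNIV \<and> complex_of_real s \<noteq> 1"
          by (auto simp: eventually_at_left_field intro!: exI[of _ 0])
        show "((\<lambda>s. complex_of_real s) \<longlongrightarrow> 1) (at_left 1)"
          using tendsto_of_real[OF tendsto_ident_at[of "1::real" "{..<1}"]] by simp
      qed
      show ?thesis using filterlim_compose[OF l1 l2] by (simp add: D_def[abs_def] M1)
    qed
    have ev01: "\<forall>\<^sub>F s in at_left 1. 0 < s \<and> s < (1::real)"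
      by (auto simp: eventually_at_left_field intro!: exI[of _ 0])
    have ineq: "\<forall>\<^sub>F s in at_left 1. (1 + s) * (cmod (1 - cnj m * (1 + (of_real s - 1) * D s)))^2
                 \<le> (1 - (cmod m)^2) * (2 * Re (D s) - (1 - s) * (cmod (D s))^2)"
      using ev01
    proof eventually_elim
      case (elim s)
      then have s1: "complex_of_real s \<noteq> 1" by (metis of_real_eq_1_iff less_irrefl)
      have Mrep: "M (of_real s) = 1 + (of_real s - 1) * D s"
        using s1 by (simp add: D_def)
      have "(1 - s) * ((1 + s) * (cmod (1 - cnj m * (1 + (of_real s - 1) * D s)))^2)
            = (1 - s^2) * (cmod (1 - cnj m * M (of_real s)))^2"
        by (simp add: Mrep power2_eq_square algebra_simps)
      also have "\<dots> \<le> (1 - (cmod m)^2) * (1 - (cmod (M (of_real s)))^2)" using SPs elim by auto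
      also have "\<dots> = (1 - s) * ((1 - (cmod m)^2) * (2 * Re (D s) - (1 - s) * (cmod (D s))^2))"
        by (simp add: Mrep AL)
      finally show ?case using elim by (simp add: mult_le_cancel_left_pos)
    qed
    have lim1: "((\<lambda>s. (1 + s) * (cmod (1 - cnj m * (1 + (of_real s - 1) * D s)))^2) \<longlongrightarrow>
                 (1 + 1) * (cmod (1 - cnj m * (1 + (of_real 1 - 1) * of_real (1-t))))^2) (at_left (1::real))"
      by (intro tendsto_intros Dlim tendsto_ident_at)
    have lim2: "((\<lambda>s. (1 - (cmod m)^2) * (2 * Re (D s) - (1 - s) * (cmod (D s))^2)) \<longlongrightarrow>
                 (1 - (cmod m)^2) * (2 * Re (of_real (1-t)) - (1 - 1) * (cmod (of_real (1-t) :: complex))^2)) (at_left (1::real))"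
      by (intro tendsto_intros Dlim tendsto_ident_at)
    have "(1 + 1) * (cmod (1 - cnj m * (1 + (of_real 1 - 1) * of_real (1-t))))^2
          \<le> (1 - (cmod m)^2) * (2 * Re (of_real (1-t)) - (1 - 1) * (cmod (of_real (1-t) :: complex))^2)"
      by (rule tendsto_le[OF trivial_limit_at_left_real lim2 lim1 ineq])
    then have "2 * (cmod (1 - cnj m))^2 \<le> (1 - (cmod m)^2) * (2 * (1 - t))" by simp
    from final_alg[OF this t(2)] show ?thesis by (simp add: m_eq)
  qed
  have g0: "g 0 = 0" using g\<psi>[OF one(2)] z0 by simp
  have dg0: "deriv g 0 = 1" using dg[OF one(2)] z0 d0 by simp
  have zU: "0 \<in> U" using one(2) z0 by (force simp: U_def)
  have gd: "(g has_field_derivative 1) (at 0)"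
    using holomorphic_derivI[OF holg[folded U_def] oU zU] dg0 by simp
  have l1: "((\<lambda>y. g y / y) \<longlongrightarrow> 1) (at 0)"
    using gd by (simp add: has_field_derivative_iff g0)
  have l2: "filterlim (\<lambda>t::real. of_real t * a) (at 0) (at_right 0)"
  proof (subst filterlim_at, intro conjI)
    show "\<forall>\<^sub>F s in at_right 0. of_real s * a \<in> UNIV \<and> of_real s * a \<noteq> 0"
      using a0 by (auto simp: eventually_at_right_field intro!: exI[of _ 1])
    show "((\<lambda>s. of_real s * a) \<longlongrightarrow> 0) (at_right 0)"
      using tendsto_mult_right[OF tendsto_of_real[OF tendsto_ident_at[of "0::real" "{0<..}"]], of a] by simp
  qed
  have l3: "((\<lambda>t. a * (g (of_real t * a) / (of_real t * a))) \<longlongrightarrow> a * 1) (at_right 0)"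
    by (intro tendsto_mult tendsto_const filterlim_compose[OF l1 l2])
  have l4: "((\<lambda>t. Re (a * (g (of_real t * a) / (of_real t * a)))) \<longlongrightarrow> Re a) (at_right 0)"
    using tendsto_Re[OF l3] by simp
  have ev: "\<forall>\<^sub>F t in at_right 0. 1/2 \<le> Re (a * (g (of_real t * a) / (of_real t * a)))"
  proof -
    have "\<forall>\<^sub>F t in at_right 0. 0 < t \<and> t < (1::real)"
      by (auto simp: eventually_at_right_field intro!: exI[of _ 1])
    then show ?thesis
    proof eventually_elim
      case (elim t)
      have "a * (g (of_real t * a) / (of_real t * a)) = g (of_real t * a) / of_real t"
        using a0 elim by (simp add: field_simps)
      then have "Re (a * (g (of_real t * a) / (of_real t * a))) = Re (g (of_real t * a)) / t"
        by (simp add: Re_divide_of_real)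
      moreover have "t / 2 \<le> Re (g (of_real t * a))" using key elim by auto
      ultimately show ?case using elim a0 by (simp add: field_simps)
    qed
  qed
  have "1/2 \<le> Re a" by (rule tendsto_le[OF trivial_limit_at_right_real l4 tendsto_const ev])
  then show ?thesis by (simp add: a_def)
qed

lemma MS:
  fixes \<phi> :: "complex \<Rightarrow> complex"
  assumes nc: "normalized_convex_univalent \<phi>" and z: "norm z < 1" and z0: "z \<noteq> 0"
  shows "1/2 \<le> Re (\<phi> z / z)"
proof -
  have hol: "\<phi> holomorphic_on ball 0 1" and \<phi>0: "\<phi> 0 = 0" and d\<phi>0: "deriv \<phi> 0 = 1"
    and inj: "inj_on \<phi> (ball 0 1)" and cv: "convex (\<phi> ` ball 0 1)"
    using nc by (auto simp: normalized_convex_univalent_def)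
  define R where "R = 1 / norm z"
  have R: "1 < R" using z z0 by (simp add: R_def)
  define \<psi> where "\<psi> \<zeta> = \<phi> (z * \<zeta>) / z" for \<zeta>
  have sc: "z * \<zeta> \<in> ball 0 1" if "\<zeta> \<in> ball 0 R" for \<zeta>
  proof -
    have "norm \<zeta> < 1 / norm z" using that by (simp add: R_def)
    then have "norm z * norm \<zeta> < 1" using z0 by (simp add: field_simps)
    then show ?thesis by (simp add: norm_mult)
  qed
  have hol\<psi>: "\<psi> holomorphic_on ball 0 R"
  proof -
    have "(\<phi> \<circ> (\<lambda>\<zeta>. z * \<zeta>)) holomorphic_on ball 0 R"
      by (rule holomorphic_on_compose_gen[OF _ hol]) (auto intro!: holomorphic_intros sc)
    then show ?thesis unfolding \<psi>_def[abs_def] o_def by (intro holomorphic_intros) (use z0 in auto)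
  qed
  have inj\<psi>: "inj_on \<psi> (ball 0 R)"
  proof (rule inj_onI)
    fix x y assume x: "x \<in> ball 0 R" and y: "y \<in> ball 0 R" and e: "\<psi> x = \<psi> y"
    then have "\<phi> (z * x) = \<phi> (z * y)" using z0 by (simp add: \<psi>_def)
    then have "z * x = z * y" using inj_onD[OF inj _ sc[OF x] sc[OF y]] by simp
    then show "x = y" using z0 by simp
  qed
  have \<psi>0: "\<psi> 0 = 0" by (simp add: \<psi>_def \<phi>0)
  have d\<psi>0: "deriv \<psi> 0 = 1"
  proof -
    have d: "(\<phi> has_field_derivative deriv \<phi> 0) (at (z * 0))"
      using holomorphic_derivI[OF hol open_ball, of 0] by simp
    have e: "((\<lambda>\<zeta>. z * \<zeta>) has_field_derivative z) (at 0)" by (auto intro!: derivative_eq_intros)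
    have "((\<lambda>\<zeta>. \<phi> (z * \<zeta>)) has_field_derivative deriv \<phi> 0 * z) (at 0)" by (rule DERIV_chain2[OF d e])
    then have "(\<psi> has_field_derivative deriv \<phi> 0 * z / z) (at 0)"
      unfolding \<psi>_def[abs_def] by (rule DERIV_cdivide)
    then show ?thesis using z0 d\<phi>0 by (simp add: DERIV_imp_deriv)
  qed
  have img: "\<psi> ` ball 0 1 = (\<lambda>w. w / z) ` (\<phi> ` ball 0 (norm z))"
  proof -
    have "ball 0 (norm z) = (\<lambda>\<zeta>. z * \<zeta>) ` ball 0 1"
    proof (intro equalityI subsetI)
      fix x :: complex assume "x \<in> ball 0 (norm z)"
      then have "x / z \<in> ball 0 1" "x = z * (x / z)" using z0 by (auto simp: norm_divide)
      then show "x \<in> (\<lambda>\<zeta>. z * \<zeta>) ` ball 0 1" by blast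
    next
      fix x :: complex assume "x \<in> (\<lambda>\<zeta>. z * \<zeta>) ` ball 0 1"
      then obtain \<zeta> where "norm \<zeta> < 1" "x = z * \<zeta>" by auto
      moreover then have "norm z * norm \<zeta> < norm z * 1" using z0 by (intro mult_strict_left_mono) auto
      ultimately show "x \<in> ball 0 (norm z)" by (simp add: norm_mult)
    qed
    then show ?thesis by (simp add: image_image \<psi>_def)
  qed
  have cv1: "convex (\<phi> ` ball 0 (norm z))"
    by (rule study[OF hol inj \<phi>0 cv]) (use z z0 in auto)
  have cv\<psi>: "convex (\<psi> ` ball 0 1)"
    unfolding img by (rule convex_linear_image[OF bounded_linear.linear[OF bounded_linear_divide] cv1])
  have "1/2 \<le> Re (\<psi> 1)" by (rule lemML[OF R hol\<psi> inj\<psi> \<psi>0 d\<psi>0 cv\<psi>])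
  then show ?thesis by (simp add: \<psi>_def)
qed



lemma ps_deriv:
  fixes c :: "nat \<Rightarrow> complex"
  assumes sm: "\<And>z. norm z < 1 \<Longrightarrow> summable (\<lambda>n. c n * z^n)" and z: "norm z < 1"
  shows "((\<lambda>z. \<Sum>n. c n * z^n) has_field_derivative (\<Sum>n. diffs c n * z^n)) (at z)"
  by (rule termdiffs_strong'[of 1]) (use sm z in auto)

lemma ps_diffs_summ:
  fixes c :: "nat \<Rightarrow> complex"
  assumes sm: "\<And>z. norm z < 1 \<Longrightarrow> summable (\<lambda>n. c n * z^n)" and z: "norm z < 1"
  shows "summable (\<lambda>n. diffs c n * z^n)"
  by (rule termdiff_converges[of z 1]) (use sm z in auto)

lemma deriv_eq_series:
  fixes c :: "nat \<Rightarrow> complex"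
  assumes sm: "\<And>z. norm z < 1 \<Longrightarrow> summable (\<lambda>n. c n * z^n)"
    and F: "\<And>z. norm z < 1 \<Longrightarrow> F z = (\<Sum>n. c n * z^n)" and z: "norm z < 1"
  shows "deriv F z = (\<Sum>n. diffs c n * z^n)"
proof -
  have "(F has_field_derivative (\<Sum>n. diffs c n * z^n)) (at z)"
    by (rule has_field_derivative_transform_within_open[OF ps_deriv[OF sm z], of "ball 0 1"])
       (use z F in auto)
  then show ?thesis by (rule DERIV_imp_deriv)
qed

lemma Dform:
  fixes c :: "nat \<Rightarrow> complex" and a :: complex
  assumes sm: "\<And>z. norm z < 1 \<Longrightarrow> summable (\<lambda>n. c n * z^n)"
    and F: "\<And>z. norm z < 1 \<Longrightarrow> F z = (\<Sum>n. c n * z^n)" and z: "norm z < 1"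
  shows "deriv F z + a * z * deriv (deriv F) z = (\<Sum>n. ((1 + a * of_nat n) * diffs c n) * z^n)"
    and "summable (\<lambda>n. ((1 + a * of_nat n) * diffs c n) * z^n)"
proof -
  have sm1: "\<And>z. norm z < 1 \<Longrightarrow> summable (\<lambda>n. diffs c n * z^n)" by (rule ps_diffs_summ[OF sm])
  have sm2: "\<And>z. norm z < 1 \<Longrightarrow> summable (\<lambda>n. diffs (diffs c) n * z^n)" by (rule ps_diffs_summ[OF sm1])
  have d1: "\<And>z. norm z < 1 \<Longrightarrow> deriv F z = (\<Sum>n. diffs c n * z^n)" by (rule deriv_eq_series[OF sm F])
  have d2: "deriv (deriv F) z = (\<Sum>n. diffs (diffs c) n * z^n)" by (rule deriv_eq_series[OF sm1 d1 z])
  define d where "d n = of_nat n * diffs c n" for n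
  have dS: "d (Suc n) = diffs (diffs c) n" for n by (simp add: d_def diffs_def)
  have sd: "summable (\<lambda>n. d n * z^n)"
  proof -
    have "summable (\<lambda>n. diffs (diffs c) n * z^n * z)" by (rule summable_mult2[OF sm2[OF z]])
    then have "summable (\<lambda>n. d (Suc n) * z^(Suc n))" by (simp add: dS mult_ac)
    then show ?thesis by (subst summable_Suc_iff[symmetric])
  qed
  have d0: "d 0 = 0" by (simp add: d_def)
  have "(\<Sum>n. d n * z^n) = d 0 + (\<Sum>n. d (Suc n) * z^n) * z" by (rule powser_split_head(1)[OF sd])
  then have "(\<Sum>n. d n * z^n) = (\<Sum>n. diffs (diffs c) n * z^n) * z" by (simp only: dS d0 add_0_left)
  then have zd: "z * deriv (deriv F) z = (\<Sum>n. d n * z^n)" by (simp add: d2 mult.commute)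
  have e: "(\<lambda>n. ((1 + a * of_nat n) * diffs c n) * z^n) = (\<lambda>n. diffs c n * z^n + a * (d n * z^n))"
    by (auto simp: d_def algebra_simps)
  have s1: "summable (\<lambda>n. diffs c n * z^n)" by (rule sm1[OF z])
  have s2: "summable (\<lambda>n. a * (d n * z^n))" by (rule summable_mult[OF sd])
  show "summable (\<lambda>n. ((1 + a * of_nat n) * diffs c n) * z^n)" unfolding e by (rule summable_add[OF s1 s2])
  have "(\<Sum>n. ((1 + a * of_nat n) * diffs c n) * z^n) = (\<Sum>n. diffs c n * z^n) + (\<Sum>n. a * (d n * z^n))"
    unfolding e by (rule suminf_add[OF s1 s2, symmetric])
  also have "\<dots> = deriv F z + a * z * deriv (deriv F) z"
    using suminf_mult[OF sd, of a] by (simp add: d1[OF z] zd mult.assoc)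
  finally show "deriv F z + a * z * deriv (deriv F) z = (\<Sum>n. ((1 + a * of_nat n) * diffs c n) * z^n)" ..
qed

lemma taylor_sums:
  assumes hol: "f holomorphic_on ball 0 1" and z: "norm z < 1"
  shows "(\<lambda>n. taylor_coeff f n * z^n) sums f z"
  using holomorphic_power_series[OF hol, of z] z by (simp add: taylor_coeff_def)

lemma taylor_coeff_0: "taylor_coeff f 0 = f 0" by (simp add: taylor_coeff_def)
lemma taylor_coeff_1: "taylor_coeff f 1 = deriv f 0" "taylor_coeff f (Suc 0) = deriv f 0" by (simp_all add: taylor_coeff_def)

lemma had_summ:
  fixes a b :: "nat \<Rightarrow> complex"
  assumes sa: "\<And>z. norm z < 1 \<Longrightarrow> summable (\<lambda>n. a n * z^n)"
    and sb: "\<And>z. norm z < 1 \<Longrightarrow> summable (\<lambda>n. b n * z^n)" and z: "norm z < 1"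
  shows "summable (\<lambda>n. a n * b n * z^n)"
proof -
  define s where "s = complex_of_real (sqrt (norm z))"
  have ns: "norm s < 1" using z by (simp add: s_def real_sqrt_lt_1_iff)
  have ns2: "norm s ^ 2 = norm z" by (simp add: s_def)
  have na: "summable (\<lambda>n. norm (a n * s^n))" by (rule abs_summ_inside[OF sa ns])
  have nb: "summable (\<lambda>n. norm (b n * s^n))" by (rule abs_summ_inside[OF sb ns])
  define Ba where "Ba = (\<Sum>n. norm (a n * s^n))"
  have le: "norm (a n * s^n) \<le> Ba" for n using norm_le_suminf[OF na, of n] by (simp add: Ba_def)
  show ?thesis
  proof (rule summable_norm_cancel, rule summable_comparison_test[OF _ summable_mult[OF nb, of Ba]])
    show "\<exists>N. \<forall>n\<ge>N. norm (norm (a n * b n * z ^ n)) \<le> Ba * norm (b n * s ^ n)"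
    proof (intro exI allI impI)
      fix n
      have "norm (a n * b n * z ^ n) = norm (a n * s^n) * norm (b n * s^n)"
        by (simp add: norm_mult norm_power flip: ns2 power_mult power_mult_distrib) (simp add: power2_eq_square power_mult_distrib mult_ac mult_2_right power_add)
      also have "\<dots> \<le> Ba * norm (b n * s^n)" by (rule mult_right_mono[OF le]) simp
      finally show "norm (norm (a n * b n * z ^ n)) \<le> Ba * norm (b n * s ^ n)" by simp
    qed
  qed
qed

lemma ps_basic:
  fixes c :: "nat \<Rightarrow> complex"
  assumes sm: "\<And>z. norm z < 1 \<Longrightarrow> summable (\<lambda>n. c n * z^n)"
  shows "(\<lambda>z. \<Sum>n. c n * z^n) holomorphic_on ball 0 1"
    and "(\<lambda>z. \<Sum>n. c n * z^n) 0 = c 0"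
    and "deriv (\<lambda>z. \<Sum>n. c n * z^n) 0 = c 1"
proof -
  show "(\<lambda>z. \<Sum>n. c n * z^n) holomorphic_on ball 0 1"
    by (subst holomorphic_on_open) (auto intro!: exI ps_deriv[OF sm])
  show "(\<lambda>z. \<Sum>n. c n * z^n) 0 = c 0" by simp
  have "deriv (\<lambda>z. \<Sum>n. c n * z^n) 0 = (\<Sum>n. diffs c n * 0^n)"
  proof (rule DERIV_imp_deriv)
    show "((\<lambda>z. \<Sum>n. c n * z^n) has_field_derivative (\<Sum>n. diffs c n * 0^n)) (at 0)"
      by (rule ps_deriv) (use sm in auto)
  qed
  then show "deriv (\<lambda>z. \<Sum>n. c n * z^n) 0 = c 1" by (simp add: diffs_def)
qed

lemma sum3:
  fixes X Y :: "nat \<Rightarrow> complex"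
  assumes sX: "summable (\<lambda>n. X n * z^n)" and sY: "summable (\<lambda>n. Y n * z^n)"
  shows "summable (\<lambda>n. (X n + e * Y n - (if n = 0 then c else 0)) * z^n)"
    and "(\<Sum>n. (X n + e * Y n - (if n = 0 then c else 0)) * z^n) = (\<Sum>n. X n * z^n) + e * (\<Sum>n. Y n * z^n) - c"
proof -
  have eq: "(\<lambda>n. (X n + e * Y n - (if n = 0 then c else 0)) * z^n)
      = (\<lambda>n. X n * z^n + e * (Y n * z^n) - (if n = 0 then c else 0))"
    by (auto simp: fun_eq_iff algebra_simps)
  have s1: "summable (\<lambda>n. e * (Y n * z^n))" by (rule summable_mult[OF sY])
  have s0: "(\<lambda>n. if n = 0 then c else 0) sums c" using sums_single[of 0 "\<lambda>_. c"] by simp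
  show "summable (\<lambda>n. (X n + e * Y n - (if n = 0 then c else 0)) * z^n)"
    unfolding eq by (intro summable_diff summable_add sX s1 sums_summable[OF s0])
  have "(\<lambda>n. X n * z^n + e * (Y n * z^n) - (if n = 0 then c else 0)) sums ((\<Sum>n. X n * z^n) + e * (\<Sum>n. Y n * z^n) - c)"
    by (intro sums_diff sums_add summable_sums sX sums_mult sY s0)
  then show "(\<Sum>n. (X n + e * Y n - (if n = 0 then c else 0)) * z^n) = (\<Sum>n. X n * z^n) + e * (\<Sum>n. Y n * z^n) - c"
    unfolding eq by (rule sums_unique[symmetric])
qed

theorem corollary4p8:
  fixes \<alpha> \<beta> :: real and h g \<phi> :: "complex \<Rightarrow> complex"
  assumes "\<alpha> \<ge> 0" and "0 \<le> \<beta>" and "\<beta> < 1"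
    and "W_H0 \<alpha> \<beta> h g"
    and "normalized_convex_univalent \<phi>"
  shows "W_H0 \<alpha> \<beta> (hadamard h \<phi>) (hadamard g \<phi>)"
proof -
  note W = assms(4)[unfolded W_H0_def]
  have hh: "h holomorphic_on ball 0 1" and hg: "g holomorphic_on ball 0 1" and h0: "h 0 = 0"
    and dh0: "deriv h 0 = 1" and g0: "g 0 = 0" and dg0: "deriv g 0 = 0"
    and ineq: "\<And>z. z \<in> ball 0 1 \<Longrightarrow> Re (deriv h z + of_real \<alpha> * z * deriv (deriv h) z - of_real \<beta>)
                > norm (deriv g z + of_real \<alpha> * z * deriv (deriv g) z)"
    using W by auto
  have nc: "normalized_convex_univalent \<phi>" by fact
  have h\<phi>: "\<phi> holomorphic_on ball 0 1" "\<phi> 0 = 0" "deriv \<phi> 0 = 1"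
    using nc by (auto simp: normalized_convex_univalent_def)
  define A where "A = taylor_coeff h"
  define Bg where "Bg = taylor_coeff g"
  define b where "b = taylor_coeff \<phi>"
  have sA: "\<And>z. norm z < 1 \<Longrightarrow> summable (\<lambda>n. A n * z^n)"
    and eA: "\<And>z. norm z < 1 \<Longrightarrow> h z = (\<Sum>n. A n * z^n)"
    using taylor_sums[OF hh] by (auto simp: A_def sums_iff)
  have sBg: "\<And>z. norm z < 1 \<Longrightarrow> summable (\<lambda>n. Bg n * z^n)"
    and eBg: "\<And>z. norm z < 1 \<Longrightarrow> g z = (\<Sum>n. Bg n * z^n)"
    using taylor_sums[OF hg] by (auto simp: Bg_def sums_iff)
  have sb: "\<And>z. norm z < 1 \<Longrightarrow> summable (\<lambda>n. b n * z^n)"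
    and eb: "\<And>z. norm z < 1 \<Longrightarrow> \<phi> z = (\<Sum>n. b n * z^n)"
    using taylor_sums[OF h\<phi>(1)] by (auto simp: b_def sums_iff)
  have A0: "A 0 = 0" and A1: "A 1 = 1" using h0 dh0 by (simp_all add: A_def taylor_coeff_0 taylor_coeff_1)
  have Bg0: "Bg 0 = 0" and Bg1: "Bg 1 = 0" using g0 dg0 by (simp_all add: Bg_def taylor_coeff_0 taylor_coeff_1)
  have b0: "b 0 = 0" and b1: "b 1 = 1" using h\<phi> by (simp_all add: b_def taylor_coeff_0 taylor_coeff_1)
  define c where "c n = A n * b n" for n
  define cg where "cg n = Bg n * b n" for n
  have Hdef: "hadamard h \<phi> = (\<lambda>z. \<Sum>n. c n * z^n)" by (simp add: fun_eq_iff hadamard_def c_def A_def b_def)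
  have Gdef: "hadamard g \<phi> = (\<lambda>z. \<Sum>n. cg n * z^n)" by (simp add: fun_eq_iff hadamard_def cg_def Bg_def b_def)
  have sc: "\<And>z. norm z < 1 \<Longrightarrow> summable (\<lambda>n. c n * z^n)"
    using had_summ[OF sA sb] by (simp add: c_def)
  have scg: "\<And>z. norm z < 1 \<Longrightarrow> summable (\<lambda>n. cg n * z^n)"
    using had_summ[OF sBg sb] by (simp add: cg_def)
  define q where "q n = b (Suc n)" for n
  have q0: "q 0 = 1" using b1 by (simp add: q_def)
  have sq: "summable (\<lambda>n. q n * \<zeta>^n)" if \<zeta>: "norm \<zeta> < 1" for \<zeta>
  proof (cases "\<zeta> = 0")
    case True then show ?thesis using sums_summable[OF powser_sums_zero[of q]] by simp
  next
    case False
    have "summable (\<lambda>n. b (Suc n) * \<zeta>^(Suc n))" using sb[OF \<zeta>] by (subst summable_Suc_iff)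
    then have "summable (\<lambda>n. b (Suc n) * \<zeta>^(Suc n) * inverse \<zeta>)" by (rule summable_mult2)
    moreover have "(\<lambda>n. b (Suc n) * \<zeta>^(Suc n) * inverse \<zeta>) = (\<lambda>n. q n * \<zeta>^n)"
      using False by (auto simp: fun_eq_iff q_def)
    ultimately show ?thesis by simp
  qed
  have Qv: "1/2 \<le> Re (\<Sum>n. q n * \<zeta>^n)" if \<zeta>: "norm \<zeta> < 1" for \<zeta>
  proof (cases "\<zeta> = 0")
    case True then show ?thesis using q0 by simp
  next
    case False
    have "(\<Sum>n. b n * \<zeta>^n) = b 0 + (\<Sum>n. b (Suc n) * \<zeta>^n) * \<zeta>" by (rule powser_split_head(1)[OF sb[OF \<zeta>]])
    then have "\<phi> \<zeta> = (\<Sum>n. q n * \<zeta>^n) * \<zeta>" using eb[OF \<zeta>] b0 by (simp add: q_def)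
    then have "(\<Sum>n. q n * \<zeta>^n) = \<phi> \<zeta> / \<zeta>" using False by simp
    then show ?thesis using MS[OF nc \<zeta> False] by simp
  qed
  show ?thesis
    unfolding W_H0_def
  proof (intro conjI ballI)
    show "hadamard h \<phi> holomorphic_on ball 0 1" unfolding Hdef by (rule ps_basic(1)[OF sc])
    show "hadamard g \<phi> holomorphic_on ball 0 1" unfolding Gdef by (rule ps_basic(1)[OF scg])
    show "hadamard h \<phi> 0 = 0" unfolding Hdef ps_basic(2)[OF sc] by (simp add: c_def A0)
    show "hadamard g \<phi> 0 = 0" unfolding Gdef ps_basic(2)[OF scg] by (simp add: cg_def Bg0)
    have dH: "deriv (\<lambda>z. \<Sum>n. c n * z^n) 0 = c 1" using ps_basic(3)[of c] sc by blast
    have dG: "deriv (\<lambda>z. \<Sum>n. cg n * z^n) 0 = cg 1" using ps_basic(3)[of cg] scg by blast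
    show "deriv (hadamard h \<phi>) 0 = 1" unfolding Hdef dH unfolding c_def using A1 b1 by simp
    show "deriv (hadamard g \<phi>) 0 = 0" unfolding Gdef dG unfolding cg_def using Bg1 by simp
    fix z :: complex assume z: "z \<in> ball 0 1"
    then have nz: "norm z < 1" by simp
    define a where "a = complex_of_real \<alpha>"
    define X where "X n = (1 + a * of_nat n) * diffs A n" for n
    define Y where "Y n = (1 + a * of_nat n) * diffs Bg n" for n
    define Xc where "Xc n = (1 + a * of_nat n) * diffs c n" for n
    define Yc where "Yc n = (1 + a * of_nat n) * diffs cg n" for n
    have XcX: "Xc n = X n * q n" for n by (simp add: Xc_def X_def diffs_def c_def q_def mult_ac)
    have YcY: "Yc n = Y n * q n" for n by (simp add: Yc_def Y_def diffs_def cg_def q_def mult_ac)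
    have Dh: "deriv h \<zeta> + a * \<zeta> * deriv (deriv h) \<zeta> = (\<Sum>n. X n * \<zeta>^n)"
      and sX: "summable (\<lambda>n. X n * \<zeta>^n)" if "norm \<zeta> < 1" for \<zeta>
      unfolding X_def using Dform[OF sA eA that, of a] by auto
    have Dg: "deriv g \<zeta> + a * \<zeta> * deriv (deriv g) \<zeta> = (\<Sum>n. Y n * \<zeta>^n)"
      and sY: "summable (\<lambda>n. Y n * \<zeta>^n)" if "norm \<zeta> < 1" for \<zeta>
      unfolding Y_def using Dform[OF sBg eBg that, of a] by auto
    have DH: "deriv (hadamard h \<phi>) z + a * z * deriv (deriv (hadamard h \<phi>)) z = (\<Sum>n. Xc n * z^n)"
      and sXc: "summable (\<lambda>n. Xc n * z^n)"
      unfolding Xc_def using Dform[OF sc _ nz, of "hadamard h \<phi>" a] by (auto simp: Hdef)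
    have DG: "deriv (hadamard g \<phi>) z + a * z * deriv (deriv (hadamard g \<phi>)) z = (\<Sum>n. Yc n * z^n)"
      and sYc: "summable (\<lambda>n. Yc n * z^n)"
      unfolding Yc_def using Dform[OF scg _ nz, of "hadamard g \<phi>" a] by (auto simp: Gdef)
    define DGz where "DGz = (\<Sum>n. Yc n * z^n)"
    define \<epsilon> where "\<epsilon> = (if DGz = 0 then 1 else - cnj DGz / of_real (cmod DGz))"
    have \<epsilon>n: "cmod \<epsilon> \<le> 1" by (simp add: \<epsilon>_def norm_divide)
    have \<epsilon>D: "\<epsilon> * DGz = - of_real (cmod DGz)"
    proof (cases "DGz = 0")
      case False
      have "\<epsilon> * DGz = - (DGz * cnj DGz) / of_real (cmod DGz)" using False by (simp add: \<epsilon>_def)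
      also have "DGz * cnj DGz = of_real ((cmod DGz)^2)" by (rule complex_norm_square[symmetric])
      finally show ?thesis using False by (simp add: power2_eq_square)
    qed (simp add: \<epsilon>_def)
    define p where "p n = X n + \<epsilon> * Y n - (if n = 0 then of_real \<beta> else 0)" for n
    have sp: "summable (\<lambda>n. p n * \<zeta>^n)" if "norm \<zeta> < 1" for \<zeta>
      unfolding p_def by (rule sum3(1)[OF sX[OF that] sY[OF that]])
    have Pp: "0 < Re (\<Sum>n. p n * \<zeta>^n)" if \<zeta>: "norm \<zeta> < 1" for \<zeta>
    proof -
      have e: "(\<Sum>n. p n * \<zeta>^n) = (\<Sum>n. X n * \<zeta>^n) + \<epsilon> * (\<Sum>n. Y n * \<zeta>^n) - of_real \<beta>"
        unfolding p_def by (rule sum3(2)[OF sX[OF \<zeta>] sY[OF \<zeta>]])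
      have i: "Re ((\<Sum>n. X n * \<zeta>^n) - of_real \<beta>) > norm (\<Sum>n. Y n * \<zeta>^n)"
      proof -
        have "Re (deriv h \<zeta> + of_real \<alpha> * \<zeta> * deriv (deriv h) \<zeta> - of_real \<beta>)
               > norm (deriv g \<zeta> + of_real \<alpha> * \<zeta> * deriv (deriv g) \<zeta>)"
          using ineq \<zeta> by simp
        then show ?thesis by (simp only: Dh[OF \<zeta>, unfolded a_def] Dg[OF \<zeta>, unfolded a_def])
      qed
      have "- Re (\<epsilon> * (\<Sum>n. Y n * \<zeta>^n)) \<le> norm (\<epsilon> * (\<Sum>n. Y n * \<zeta>^n))"
        using abs_Re_le_cmod[of "\<epsilon> * (\<Sum>n. Y n * \<zeta>^n)"] by linarith
      also have "\<dots> \<le> norm (\<Sum>n. Y n * \<zeta>^n)"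
        using \<epsilon>n by (simp add: norm_mult mult_left_le_one_le)
      finally show ?thesis using i by (simp add: e)
    qed
    have K: "0 < Re (\<Sum>n. p n * q n * z^n)"
      by (rule lemK[OF sp sq Pp Qv q0 nz])
    have pq: "p n * q n = Xc n + \<epsilon> * Yc n - (if n = 0 then of_real \<beta> else 0)" for n
      using q0 by (cases "n = 0") (simp_all add: p_def XcX YcY algebra_simps)
    have "(\<Sum>n. p n * q n * z^n) = (\<Sum>n. Xc n * z^n) + \<epsilon> * DGz - of_real \<beta>"
      unfolding pq DGz_def by (rule sum3(2)[OF sXc sYc])
    with K \<epsilon>D have "0 < Re ((\<Sum>n. Xc n * z^n) - of_real \<beta>) - cmod DGz" by simp
    then show "Re (deriv (hadamard h \<phi>) z + of_real \<alpha> * z * deriv (deriv (hadamard h \<phi>)) z - of_real \<beta>)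
          > norm (deriv (hadamard g \<phi>) z + of_real \<alpha> * z * deriv (deriv (hadamard g \<phi>)) z)"
      using DH DG by (simp add: a_def DGz_def)
  qed
qed


end
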